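(* Let $p\in k^\times$, $A_p=k\langle x_1,x_2\rangle/(x_2x_1-px_1x_2)$, and $K$ a Hopf algebra with antipode $S$ such that $A_p$ is a right $K$-comodule algebra via $\rho(x_i)=x_1\otimes y_{1i}+x_2\otimes y_{2i}$. If $S^2=\mathrm{Id}_K$, then $$y_{21}y_{11}=p^{-1}y_{11}y_{21},\quad y_{22}y_{12}=p^{-1}y_{12}y_{22},\quad py_{21}y_{12}=p^{-1}y_{12}y_{21},\quad y_{22}y_{11}=y_{11}y_{22}.$$
   Context: Here $S$ is bijective since $S^2=\mathrm{Id}$. The homological codeterminant ${\sf D}$ of the coaction is the grouplike element with $\rho^!(x_1^*x_2^* )={\sf D}\otimes x_1^*x_2^*$, where $\rho^!(x_i^* )=\sum_s y_{is}\otimes x_s^*$ is the induced left coaction on the Ext-algebra $E=k\langle x_1^*,x_2^*\rangle/(x_2^*x_1^*+p^{-1}x_1^*x_2^*,(x_1^* )^2,(x_2^* )^2)$. *)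

theory Defs
  imports Main
begin

text \<open>A k-algebra K: a ring 'h together with a ring map iota : k -> K into the centre.
  Scalar multiplication c . x is iota c * x.\<close>
definition k_algebra :: "('k::field \<Rightarrow> 'h::ring_1) \<Rightarrow> bool" where
  "k_algebra \<iota> \<longleftrightarrow> (\<forall>a b. \<iota> (a + b) = \<iota> a + \<iota> b) \<and> (\<forall>a b. \<iota> (a * b) = \<iota> a * \<iota> b)
     \<and> \<iota> 1 = 1 \<and> (\<forall>c x. \<iota> c * x = x * \<iota> c)"

definition lin_fun :: "('k::field \<Rightarrow> 'h::ring_1) \<Rightarrow> ('h \<Rightarrow> 'k) \<Rightarrow> bool" where
  "lin_fun \<iota> \<phi> \<longleftrightarrow> (\<forall>x y. \<phi> (x + y) = \<phi> x + \<phi> y) \<and> (\<forall>c x. \<phi> (\<iota> c * x) = c * \<phi> x)"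

definition lin_map :: "('k::field \<Rightarrow> 'h::ring_1) \<Rightarrow> ('h \<Rightarrow> 'h) \<Rightarrow> bool" where
  "lin_map \<iota> f \<longleftrightarrow> (\<forall>x y. f (x + y) = f x + f y) \<and> (\<forall>c x. f (\<iota> c * x) = \<iota> c * f x)"

text \<open>Elements of K (x) K are represented by finite lists of simple tensors; two lists
  represent the same tensor iff all functionals phi (x) psi agree on them (over a field
  the functionals phi (x) psi separate the points of V (x) W). Same for K (x) K (x) K.\<close>
definition teq2 :: "('k::field \<Rightarrow> 'h::ring_1) \<Rightarrow> ('h \<times> 'h) list \<Rightarrow> ('h \<times> 'h) list \<Rightarrow> bool" where
  "teq2 \<iota> xs ys \<longleftrightarrow> (\<forall>\<phi> \<psi>. lin_fun \<iota> \<phi> \<and> lin_fun \<iota> \<psi> \<longrightarrow>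
      (\<Sum>(a, b)\<leftarrow>xs. \<phi> a * \<psi> b) = (\<Sum>(a, b)\<leftarrow>ys. \<phi> a * \<psi> b))"

definition teq3 :: "('k::field \<Rightarrow> 'h::ring_1) \<Rightarrow> ('h \<times> 'h \<times> 'h) list \<Rightarrow> ('h \<times> 'h \<times> 'h) list \<Rightarrow> bool" where
  "teq3 \<iota> xs ys \<longleftrightarrow> (\<forall>\<phi> \<psi> \<chi>. lin_fun \<iota> \<phi> \<and> lin_fun \<iota> \<psi> \<and> lin_fun \<iota> \<chi> \<longrightarrow>
      (\<Sum>(a, b, c)\<leftarrow>xs. \<phi> a * \<psi> b * \<chi> c) = (\<Sum>(a, b, c)\<leftarrow>ys. \<phi> a * \<psi> b * \<chi> c))"

definition hopf_algebra ::
  "('k::field \<Rightarrow> 'h::ring_1) \<Rightarrow> ('h \<Rightarrow> ('h \<times> 'h) list) \<Rightarrow> ('h \<Rightarrow> 'k) \<Rightarrow> ('h \<Rightarrow> 'h) \<Rightarrow> bool" where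
  "hopf_algebra \<iota> \<Delta> \<epsilon> S \<longleftrightarrow>
     k_algebra \<iota>
     \<comment> \<open>Delta is k-linear\<close>
     \<and> (\<forall>a b. teq2 \<iota> (\<Delta> (a + b)) (\<Delta> a @ \<Delta> b))
     \<and> (\<forall>c a. teq2 \<iota> (\<Delta> (\<iota> c * a)) (map (\<lambda>(x, y). (\<iota> c * x, y)) (\<Delta> a)))
     \<comment> \<open>coassociativity\<close>
     \<and> (\<forall>a. teq3 \<iota> (concat (map (\<lambda>(x, b). map (\<lambda>(c, d). (c, d, b)) (\<Delta> x)) (\<Delta> a)))
                    (concat (map (\<lambda>(x, b). map (\<lambda>(c, d). (x, c, d)) (\<Delta> b)) (\<Delta> a))))
     \<comment> \<open>counit\<close>
     \<and> lin_fun \<iota> \<epsilon>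
     \<and> (\<forall>a. (\<Sum>(x, y)\<leftarrow>\<Delta> a. \<iota> (\<epsilon> x) * y) = a \<and> (\<Sum>(x, y)\<leftarrow>\<Delta> a. x * \<iota> (\<epsilon> y)) = a)
     \<comment> \<open>Delta and eps are algebra maps (bialgebra)\<close>
     \<and> (\<forall>a b. teq2 \<iota> (\<Delta> (a * b))
                 (concat (map (\<lambda>(x, y). map (\<lambda>(x', y'). (x * x', y * y')) (\<Delta> b)) (\<Delta> a))))
     \<and> teq2 \<iota> (\<Delta> 1) [(1, 1)]
     \<and> (\<forall>a b. \<epsilon> (a * b) = \<epsilon> a * \<epsilon> b) \<and> \<epsilon> 1 = 1
     \<comment> \<open>antipode\<close>
     \<and> lin_map \<iota> S
     \<and> (\<forall>a. (\<Sum>(x, y)\<leftarrow>\<Delta> a. S x * y) = \<iota> (\<epsilon> a) \<and> (\<Sum>(x, y)\<leftarrow>\<Delta> a. x * S y) = \<iota> (\<epsilon> a))"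

text \<open>A_p (x) K, modelled via the PBW basis x1^a x2^b of A_p:
  an element is the function (a,b) |-> coefficient in K of x1^a x2^b.
  Multiplication uses x2^b x1^c = p^(b c) x1^c x2^b.\<close>
definition qp_mult :: "('k::field \<Rightarrow> 'h::ring_1) \<Rightarrow> 'k \<Rightarrow> (nat \<times> nat \<Rightarrow> 'h) \<Rightarrow> (nat \<times> nat \<Rightarrow> 'h)
    \<Rightarrow> (nat \<times> nat \<Rightarrow> 'h)" where
  "qp_mult \<iota> p F G = (\<lambda>(m, n). \<Sum>a\<le>m. \<Sum>b\<le>n. \<iota> (p ^ (b * (m - a))) * (F (a, b) * G (m - a, n - b)))"

definition rho_gen :: "(nat \<Rightarrow> nat \<Rightarrow> 'h::ring_1) \<Rightarrow> nat \<Rightarrow> (nat \<times> nat \<Rightarrow> 'h)" where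
  "rho_gen y i = (\<lambda>ab. if ab = (1, 0) then y 1 i else if ab = (0, 1) then y 2 i else 0)"

text \<open>A_p is a right K-comodule algebra via rho: rho extends to an algebra map
  A_p -> A_p (x) K (i.e. respects x2 x1 = p x1 x2), and rho is coassociative and counital,
  which (both sides being algebra maps and x1, x2 linearly independent) amounts to
  Delta(y_ij) = sum_s y_is (x) y_sj and eps(y_ij) = delta_ij.\<close>
definition comodule_algebra_Ap ::
  "('k::field \<Rightarrow> 'h::ring_1) \<Rightarrow> 'k \<Rightarrow> ('h \<Rightarrow> ('h \<times> 'h) list) \<Rightarrow> ('h \<Rightarrow> 'k)
     \<Rightarrow> (nat \<Rightarrow> nat \<Rightarrow> 'h) \<Rightarrow> bool" where
  "comodule_algebra_Ap \<iota> p \<Delta> \<epsilon> y \<longleftrightarrow>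
     qp_mult \<iota> p (rho_gen y 2) (rho_gen y 1) = (\<lambda>m. \<iota> p * qp_mult \<iota> p (rho_gen y 1) (rho_gen y 2) m)
     \<and> (\<forall>i\<in>{1,2}. \<forall>j\<in>{1,2}. teq2 \<iota> (\<Delta> (y i j)) [(y i 1, y 1 j), (y i 2, y 2 j)])
     \<and> (\<forall>i\<in>{1,2}. \<forall>j\<in>{1,2}. \<epsilon> (y i j) = (if i = j then 1 else 0))"

end

theory Submission
  imports Defs "HOL.Vector_Spaces"
begin

lemma ka_zero: "k_algebra \<iota> \<Longrightarrow> \<iota> 0 = 0"
  unfolding k_algebra_def by (metis add_cancel_right_right)

lemma ka_central: "k_algebra \<iota> \<Longrightarrow> \<iota> c * x = x * \<iota> c"
  unfolding k_algebra_def by blast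

lemma ka_add: "k_algebra \<iota> \<Longrightarrow> \<iota> (a + b) = \<iota> a + \<iota> b"
  unfolding k_algebra_def by blast

lemma ka_mult: "k_algebra \<iota> \<Longrightarrow> \<iota> (a * b) = \<iota> a * \<iota> b"
  unfolding k_algebra_def by blast

lemma ka_one: "k_algebra \<iota> \<Longrightarrow> \<iota> 1 = 1"
  unfolding k_algebra_def by blast

lemma ka_sum_list: "k_algebra \<iota> \<Longrightarrow> \<iota> (sum_list (map h xs)) = sum_list (map (\<lambda>x. \<iota> (h x)) xs)"
  by (induct xs) (simp_all add: ka_zero ka_add)

lemma ka_sum: "k_algebra \<iota> \<Longrightarrow> \<iota> (sum h T) = (\<Sum>x\<in>T. \<iota> (h x))"
  by (induct T rule: infinite_finite_induct) (simp_all add: ka_zero ka_add)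

lemma ka_vs: "k_algebra \<iota> \<Longrightarrow> vector_space (\<lambda>r x. \<iota> r * x)"
proof -
  assume ka: "k_algebra \<iota>"
  show ?thesis unfolding vector_space_def
    by (simp add: distrib_left distrib_right ka_add[OF ka] ka_mult[OF ka] ka_one[OF ka] mult.assoc)
qed

lemma lin_map_zero: "lin_map \<iota> g \<Longrightarrow> g 0 = 0"
  unfolding lin_map_def by (metis add_cancel_right_right add_0)

lemma lin_map_sum: "lin_map \<iota> g \<Longrightarrow> g (sum h T) = (\<Sum>x\<in>T. g (h x))"
  apply (induct T rule: infinite_finite_induct)
    apply (simp_all add: lin_map_zero)
  by (simp add: lin_map_def)

lemma lin_map_sum_list: "lin_map \<iota> g \<Longrightarrow> g (sum_list (map h xs)) = sum_list (map (\<lambda>x. g (h x)) xs)"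
  apply (induct xs) apply (simp_all add: lin_map_zero)
  by (simp add: lin_map_def)

lemma exists_coord:
  fixes \<iota> :: "'k::field \<Rightarrow> 'h::ring_1"
  assumes ka: "k_algebra \<iota>"
  shows "\<exists>R::'h \<Rightarrow> 'h \<Rightarrow> 'k. (\<forall>b. lin_fun \<iota> (\<lambda>v. R v b)) \<and> (\<forall>v. finite {b. R v b \<noteq> 0}) \<and>
     (\<forall>v T. finite T \<longrightarrow> {b. R v b \<noteq> 0} \<subseteq> T \<longrightarrow> (\<Sum>b\<in>T. \<iota> (R v b) * b) = v)"
proof -
  interpret vs: vector_space "\<lambda>r x. \<iota> r * x" using ka_vs[OF ka] .
  obtain B where B: "B \<subseteq> UNIV" "vs.independent B" "UNIV \<subseteq> vs.span B" "card B = vs.dim (UNIV::'h set)"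
    using vs.basis_exists by blast
  let ?R = "vs.representation B"
  have sp: "v \<in> vs.span B" for v using B(3) by blast
  have "lin_fun \<iota> (\<lambda>v. ?R v b)" for b
    unfolding lin_fun_def using vs.representation_add[OF B(2) sp sp] vs.representation_scale[OF B(2) sp]
    by simp
  moreover have "finite {b. ?R v b \<noteq> 0}" for v by (rule vs.finite_representation)
  moreover have "(\<Sum>b\<in>T. \<iota> (?R v b) * b) = v" if "finite T" "{b. ?R v b \<noteq> 0} \<subseteq> T" for v T
  proof -
    have "(\<Sum>b\<in>T. \<iota> (?R v b) * b) = (\<Sum>b | ?R v b \<noteq> 0. \<iota> (?R v b) * b)"
      by (rule sum.mono_neutral_cong_right) (use that in \<open>auto simp: ka_zero[OF ka]\<close>)
    also have "\<dots> = v" by (rule vs.sum_nonzero_representation_eq[OF B(2) sp])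
    finally show ?thesis .
  qed
  ultimately show ?thesis by blast
qed


definition coords :: "('k::field \<Rightarrow> 'h::ring_1) \<Rightarrow> ('h \<Rightarrow> 'h \<Rightarrow> 'k) \<Rightarrow> bool" where
  "coords \<iota> R \<longleftrightarrow> (\<forall>b. lin_fun \<iota> (\<lambda>v. R v b)) \<and> (\<forall>v. finite {b. R v b \<noteq> 0}) \<and>
     (\<forall>v T. finite T \<longrightarrow> {b. R v b \<noteq> 0} \<subseteq> T \<longrightarrow> (\<Sum>b\<in>T. \<iota> (R v b) * b) = v)"

lemma coords_exist: "k_algebra \<iota> \<Longrightarrow> \<exists>R. coords \<iota> R"
  unfolding coords_def using exists_coord by blast

lemma expand1:
  assumes ka: "k_algebra \<iota>" and co: "coords \<iota> R" and g: "lin_map \<iota> g"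
    and T: "finite T" "{b. R v b \<noteq> 0} \<subseteq> T"
  shows "g v = (\<Sum>b\<in>T. \<iota> (R v b) * g b)"
proof -
  have "g v = g (\<Sum>b\<in>T. \<iota> (R v b) * b)" using co T unfolding coords_def by simp
  also have "\<dots> = (\<Sum>b\<in>T. g (\<iota> (R v b) * b))" by (rule lin_map_sum[OF g])
  also have "\<dots> = (\<Sum>b\<in>T. \<iota> (R v b) * g b)" using g unfolding lin_map_def by simp
  finally show ?thesis .
qed

lemma expand2:
  assumes ka: "k_algebra \<iota>" and co: "coords \<iota> R"
    and l1: "\<And>c. lin_map \<iota> (\<lambda>a. f a c)" and l2: "\<And>a. lin_map \<iota> (\<lambda>c. f a c)"
    and T: "finite T" "{b. R a b \<noteq> 0} \<subseteq> T" "{b. R c b \<noteq> 0} \<subseteq> T"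
  shows "f a c = (\<Sum>b\<in>T. \<Sum>b'\<in>T. \<iota> (R a b * R c b') * f b b')"
proof -
  have "f a c = (\<Sum>b\<in>T. \<iota> (R a b) * f b c)"
    using expand1[OF ka co l1[of c] T(1,2)] .
  also have "\<dots> = (\<Sum>b\<in>T. \<iota> (R a b) * (\<Sum>b'\<in>T. \<iota> (R c b') * f b b'))"
    using expand1[OF ka co l2 T(1,3)] by simp
  also have "\<dots> = (\<Sum>b\<in>T. \<Sum>b'\<in>T. \<iota> (R a b * R c b') * f b b')"
    by (simp add: sum_distrib_left ka_mult[OF ka] mult.assoc)
  finally show ?thesis .
qed

lemma list2:
  assumes ka: "k_algebra \<iota>" and co: "coords \<iota> R"
    and l1: "\<And>c. lin_map \<iota> (\<lambda>a. f a c)" and l2: "\<And>a. lin_map \<iota> (\<lambda>c. f a c)"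
    and T: "finite T"
  shows "(\<forall>(a, c)\<in>set zs. {b. R a b \<noteq> 0} \<subseteq> T \<and> {b. R c b \<noteq> 0} \<subseteq> T) \<Longrightarrow>
    (\<Sum>(a, c)\<leftarrow>zs. f a c) = (\<Sum>b\<in>T. \<Sum>b'\<in>T. \<iota> (\<Sum>(a, c)\<leftarrow>zs. R a b * R c b') * f b b')"
proof (induct zs)
  case Nil
  then show ?case by (simp add: ka_zero[OF ka])
next
  case (Cons x zs)
  obtain a c where x: "x = (a, c)" by (cases x)
  have "f a c = (\<Sum>b\<in>T. \<Sum>b'\<in>T. \<iota> (R a b * R c b') * f b b')"
    using Cons(2) x by (intro expand2[OF ka co l1 l2 T]) auto
  then show ?case using Cons x
    by (simp add: ka_add[OF ka] distrib_right sum.distrib)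
qed

lemma sep2:
  fixes \<iota> :: "'k::field \<Rightarrow> 'h::ring_1"
  assumes ka: "k_algebra \<iota>" and eq: "teq2 \<iota> xs ys"
    and l1: "\<And>c. lin_map \<iota> (\<lambda>a. f a c)" and l2: "\<And>a. lin_map \<iota> (\<lambda>c. f a c)"
  shows "(\<Sum>(a, c)\<leftarrow>xs. f a c) = (\<Sum>(a, c)\<leftarrow>ys. f a c)"
proof -
  obtain R where co: "coords \<iota> R" using coords_exist[OF ka] by blast
  define V where "V = fst ` set (xs @ ys) \<union> snd ` set (xs @ ys)"
  define T where "T = (\<Union>v\<in>V. {b. R v b \<noteq> 0})"
  have fT: "finite T" unfolding T_def V_def using co unfolding coords_def by auto
  have sub: "(\<forall>(a, c)\<in>set zs. {b. R a b \<noteq> 0} \<subseteq> T \<and> {b. R c b \<noteq> 0} \<subseteq> T)"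
    if "set zs \<subseteq> set (xs @ ys)" for zs
    using that unfolding T_def V_def by force
  have lf: "lin_fun \<iota> (\<lambda>v. R v b)" for b using co unfolding coords_def by blast
  have "(\<Sum>(a, c)\<leftarrow>xs. f a c) = (\<Sum>b\<in>T. \<Sum>b'\<in>T. \<iota> (\<Sum>(a, c)\<leftarrow>xs. R a b * R c b') * f b b')"
    by (rule list2[OF ka co l1 l2 fT sub]) simp
  also have "\<dots> = (\<Sum>b\<in>T. \<Sum>b'\<in>T. \<iota> (\<Sum>(a, c)\<leftarrow>ys. R a b * R c b') * f b b')"
    using eq lf unfolding teq2_def by simp
  also have "\<dots> = (\<Sum>(a, c)\<leftarrow>ys. f a c)"
    by (rule list2[OF ka co l1 l2 fT sub, symmetric]) simp
  finally show ?thesis .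
qed

lemma expand3:
  assumes ka: "k_algebra \<iota>" and co: "coords \<iota> R"
    and l1: "\<And>c d. lin_map \<iota> (\<lambda>a. f a c d)" and l2: "\<And>a d. lin_map \<iota> (\<lambda>c. f a c d)"
    and l3: "\<And>a c. lin_map \<iota> (\<lambda>d. f a c d)"
    and T: "finite T" "{b. R a b \<noteq> 0} \<subseteq> T" "{b. R c b \<noteq> 0} \<subseteq> T" "{b. R d b \<noteq> 0} \<subseteq> T"
  shows "f a c d = (\<Sum>b\<in>T. \<Sum>b'\<in>T. \<Sum>b''\<in>T. \<iota> (R a b * R c b' * R d b'') * f b b' b'')"
proof -
  have "f a c d = (\<Sum>b\<in>T. \<iota> (R a b) * f b c d)"
    using expand1[OF ka co l1[of c d] T(1,2)] .
  also have "\<dots> = (\<Sum>b\<in>T. \<iota> (R a b) * (\<Sum>b'\<in>T. \<iota> (R c b') * f b b' d))"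
    using expand1[OF ka co l2 T(1,3)] by simp
  also have "\<dots> = (\<Sum>b\<in>T. \<iota> (R a b) * (\<Sum>b'\<in>T. \<iota> (R c b') * (\<Sum>b''\<in>T. \<iota> (R d b'') * f b b' b'')))"
    using expand1[OF ka co l3 T(1,4)] by simp
  also have "\<dots> = (\<Sum>b\<in>T. \<Sum>b'\<in>T. \<Sum>b''\<in>T. \<iota> (R a b * R c b' * R d b'') * f b b' b'')"
    by (simp add: sum_distrib_left ka_mult[OF ka] mult.assoc)
  finally show ?thesis .
qed

lemma list3:
  assumes ka: "k_algebra \<iota>" and co: "coords \<iota> R"
    and l1: "\<And>c d. lin_map \<iota> (\<lambda>a. f a c d)" and l2: "\<And>a d. lin_map \<iota> (\<lambda>c. f a c d)"
    and l3: "\<And>a c. lin_map \<iota> (\<lambda>d. f a c d)"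
    and T: "finite T"
  shows "(\<forall>(a, c, d)\<in>set zs. {b. R a b \<noteq> 0} \<subseteq> T \<and> {b. R c b \<noteq> 0} \<subseteq> T \<and> {b. R d b \<noteq> 0} \<subseteq> T) \<Longrightarrow>
    (\<Sum>(a, c, d)\<leftarrow>zs. f a c d) = (\<Sum>b\<in>T. \<Sum>b'\<in>T. \<Sum>b''\<in>T. \<iota> (\<Sum>(a, c, d)\<leftarrow>zs. R a b * R c b' * R d b'') * f b b' b'')"
proof (induct zs)
  case Nil
  then show ?case by (simp add: ka_zero[OF ka])
next
  case (Cons x zs)
  obtain a c d where x: "x = (a, c, d)" by (cases x) auto
  have "f a c d = (\<Sum>b\<in>T. \<Sum>b'\<in>T. \<Sum>b''\<in>T. \<iota> (R a b * R c b' * R d b'') * f b b' b'')"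
    using Cons(2) x by (intro expand3[OF ka co l1 l2 l3 T]) auto
  then show ?case using Cons x
    by (simp add: ka_add[OF ka] distrib_right sum.distrib)
qed

lemma sep3:
  fixes \<iota> :: "'k::field \<Rightarrow> 'h::ring_1"
  assumes ka: "k_algebra \<iota>" and eq: "teq3 \<iota> xs ys"
    and l1: "\<And>c d. lin_map \<iota> (\<lambda>a. f a c d)" and l2: "\<And>a d. lin_map \<iota> (\<lambda>c. f a c d)"
    and l3: "\<And>a c. lin_map \<iota> (\<lambda>d. f a c d)"
  shows "(\<Sum>(a, c, d)\<leftarrow>xs. f a c d) = (\<Sum>(a, c, d)\<leftarrow>ys. f a c d)"
proof -
  obtain R where co: "coords \<iota> R" using coords_exist[OF ka] by blast
  define V where "V = fst ` set (xs @ ys) \<union> (fst \<circ> snd) ` set (xs @ ys) \<union> (snd \<circ> snd) ` set (xs @ ys)"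
  define T where "T = (\<Union>v\<in>V. {b. R v b \<noteq> 0})"
  have fT: "finite T" unfolding T_def V_def using co unfolding coords_def by auto
  have sub: "(\<forall>(a, c, d)\<in>set zs. {b. R a b \<noteq> 0} \<subseteq> T \<and> {b. R c b \<noteq> 0} \<subseteq> T \<and> {b. R d b \<noteq> 0} \<subseteq> T)"
    if "set zs \<subseteq> set (xs @ ys)" for zs
    using that unfolding T_def V_def by force
  have lf: "lin_fun \<iota> (\<lambda>v. R v b)" for b using co unfolding coords_def by blast
  have "(\<Sum>(a, c, d)\<leftarrow>xs. f a c d) = (\<Sum>b\<in>T. \<Sum>b'\<in>T. \<Sum>b''\<in>T. \<iota> (\<Sum>(a, c, d)\<leftarrow>xs. R a b * R c b' * R d b'') * f b b' b'')"
    by (rule list3[OF ka co l1 l2 l3 fT sub]) simp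
  also have "\<dots> = (\<Sum>b\<in>T. \<Sum>b'\<in>T. \<Sum>b''\<in>T. \<iota> (\<Sum>(a, c, d)\<leftarrow>ys. R a b * R c b' * R d b'') * f b b' b'')"
    using eq lf unfolding teq3_def by simp
  also have "\<dots> = (\<Sum>(a, c, d)\<leftarrow>ys. f a c d)"
    by (rule list3[OF ka co l1 l2 l3 fT sub, symmetric]) simp
  finally show ?thesis .
qed

lemma scal_right: "k_algebra \<iota> \<Longrightarrow> x * (\<iota> r * y) = \<iota> r * (x * y)"
  by (metis ka_central mult.assoc)

lemma lin_map_sum_list2: "lin_map \<iota> g \<Longrightarrow> g (\<Sum>(x, y)\<leftarrow>L. h x y) = (\<Sum>(x, y)\<leftarrow>L. g (h x y))"
  by (induct L) (auto simp: lin_map_zero, simp add: lin_map_def)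

lemma sum_list_mult_right: "(\<Sum>x\<leftarrow>xs. g x * c) = (\<Sum>x\<leftarrow>xs. g x) * (c::'a::semiring_0)"
  by (induct xs) (simp_all add: distrib_right)

lemma sum_list_mult_left: "(\<Sum>x\<leftarrow>xs. c * g x) = c * (\<Sum>x\<leftarrow>xs. g x :: 'a::semiring_0)"
  by (induct xs) (simp_all add: distrib_left)

lemma swap2: "(\<Sum>(a, b)\<leftarrow>xs. \<Sum>(c, d)\<leftarrow>ys. F a b c d) = (\<Sum>(c, d)\<leftarrow>ys. \<Sum>(a, b)\<leftarrow>xs. F a b c d :: 'a::comm_monoid_add)"
  by (induct xs) (simp_all add: split_def sum_list_addf)

lemma swap3: "(\<Sum>(a, b, e)\<leftarrow>xs. \<Sum>(c, d, f)\<leftarrow>ys. F a b e c d f) = (\<Sum>(c, d, f)\<leftarrow>ys. \<Sum>(a, b, e)\<leftarrow>xs. F a b e c d f :: 'a::comm_monoid_add)"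
  by (induct xs) (simp_all add: split_def sum_list_addf)

lemma prodsum: "(\<Sum>(u, v)\<leftarrow>concat (map (\<lambda>(x, y). map (\<lambda>(x', y'). (x * x', y * y')) M) L). f u v) =
   (\<Sum>(x, y)\<leftarrow>L. \<Sum>(x', y')\<leftarrow>M. f (x * x') (y * y'))"
  by (induct L) (auto simp: case_prod_beta comp_def)

lemma tri1: "(\<Sum>(a1, u, v)\<leftarrow>concat (map (\<lambda>(x, b). map (\<lambda>(c, d). (x, c, d)) (D b)) L). G a1 u v) =
   (\<Sum>(x, b)\<leftarrow>L. \<Sum>(c, d)\<leftarrow>D b. G x c d)"
  by (induct L) (auto simp: case_prod_beta comp_def)

lemma tri2: "(\<Sum>(c, d, e)\<leftarrow>concat (map (\<lambda>(x, b). map (\<lambda>(c, d). (c, d, b)) (D x)) L). G c d e) =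
   (\<Sum>(x, b)\<leftarrow>L. \<Sum>(c, d)\<leftarrow>D x. G c d b)"
  by (induct L) (auto simp: case_prod_beta comp_def)

lemma hopfD:
  assumes "hopf_algebra \<iota> \<Delta> \<epsilon> S"
  shows "k_algebra \<iota>"
    and "\<And>a. teq3 \<iota> (concat (map (\<lambda>(x, b). map (\<lambda>(c, d). (c, d, b)) (\<Delta> x)) (\<Delta> a)))
                    (concat (map (\<lambda>(x, b). map (\<lambda>(c, d). (x, c, d)) (\<Delta> b)) (\<Delta> a)))"
    and "lin_fun \<iota> \<epsilon>"
    and "\<And>a. (\<Sum>(x, y)\<leftarrow>\<Delta> a. \<iota> (\<epsilon> x) * y) = a"
    and "\<And>a. (\<Sum>(x, y)\<leftarrow>\<Delta> a. x * \<iota> (\<epsilon> y)) = a"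
    and "\<And>a b. teq2 \<iota> (\<Delta> (a * b))
                 (concat (map (\<lambda>(x, y). map (\<lambda>(x', y'). (x * x', y * y')) (\<Delta> b)) (\<Delta> a)))"
    and "teq2 \<iota> (\<Delta> 1) [(1, 1)]"
    and "\<And>a b. \<epsilon> (a * b) = \<epsilon> a * \<epsilon> b" and "\<epsilon> 1 = 1"
    and "lin_map \<iota> S"
    and "\<And>a. (\<Sum>(x, y)\<leftarrow>\<Delta> a. S x * y) = \<iota> (\<epsilon> a)"
    and "\<And>a. (\<Sum>(x, y)\<leftarrow>\<Delta> a. x * S y) = \<iota> (\<epsilon> a)"
  using assms unfolding hopf_algebra_def by blast+

lemma lin_map_add: "lin_map \<iota> g \<Longrightarrow> g (x + y) = g x + g y"
  unfolding lin_map_def by blast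

lemma lin_map_scal: "lin_map \<iota> g \<Longrightarrow> g (\<iota> r * x) = \<iota> r * g x"
  unfolding lin_map_def by blast

lemma lin_fun_add: "lin_fun \<iota> g \<Longrightarrow> g (x + y) = g x + g y"
  unfolding lin_fun_def by blast

lemma lin_fun_scal: "lin_fun \<iota> g \<Longrightarrow> g (\<iota> r * x) = r * g x"
  unfolding lin_fun_def by blast

lemma lin_map_sum_listF: "(\<And>z. z \<in> set L \<Longrightarrow> lin_map \<iota> (\<lambda>x. F z x)) \<Longrightarrow> lin_map \<iota> (\<lambda>x. \<Sum>z\<leftarrow>L. F z x)"
  by (induct L) (auto simp: lin_map_def distrib_left add_ac)

lemma teq3_sym: "teq3 \<iota> xs ys \<Longrightarrow> teq3 \<iota> ys xs"
  unfolding teq3_def by metis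

lemma S_antimult:
  fixes \<iota> :: "'k::field \<Rightarrow> 'h::ring_1"
  assumes H: "hopf_algebra \<iota> \<Delta> \<epsilon> S"
  shows "S (a * b) = S b * S a"
proof -
  note hd = hopfD[OF H]
  have ka: "k_algebra \<iota>" by (rule hd(1))
  have Sl: "lin_map \<iota> S" by (rule hd(10))
  have el: "lin_fun \<iota> \<epsilon>" by (rule hd(3))
  note sr = scal_right[OF ka]
  note Sa = lin_map_add[OF Sl] and Ss = lin_map_scal[OF Sl]
  note ea = lin_fun_add[OF el] and es = lin_fun_scal[OF el]
  have A: "S c = (\<Sum>(x, y)\<leftarrow>\<Delta> c. S x * \<iota> (\<epsilon> y))" for c
  proof -
    have "S c = S (\<Sum>(x, y)\<leftarrow>\<Delta> c. x * \<iota> (\<epsilon> y))" using hd(5) by simp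
    also have "\<dots> = (\<Sum>(x, y)\<leftarrow>\<Delta> c. S (x * \<iota> (\<epsilon> y)))" by (rule lin_map_sum_list2[OF Sl])
    also have "\<dots> = (\<Sum>(x, y)\<leftarrow>\<Delta> c. S x * \<iota> (\<epsilon> y))"
      by (simp add: ka_central[OF ka, symmetric] Ss)
    finally show ?thesis .
  qed
  have B: "S (a * b) = (\<Sum>(a1, a2)\<leftarrow>\<Delta> a. \<Sum>(b1, b2)\<leftarrow>\<Delta> b. S (a1 * b1) * \<iota> (\<epsilon> (a2 * b2)))"
  proof -
    have "S (a * b) = (\<Sum>(x, y)\<leftarrow>\<Delta> (a * b). S x * \<iota> (\<epsilon> y))" by (rule A)
    also have "\<dots> = (\<Sum>(x, y)\<leftarrow>concat (map (\<lambda>(x, y). map (\<lambda>(x', y'). (x * x', y * y')) (\<Delta> b)) (\<Delta> a)). S x * \<iota> (\<epsilon> y))"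
      by (rule sep2[OF ka hd(6)]) (auto simp: lin_map_def Sa Ss ea es ka_add[OF ka] ka_mult[OF ka] distrib_left distrib_right mult.assoc sr)
    also have "\<dots> = (\<Sum>(a1, a2)\<leftarrow>\<Delta> a. \<Sum>(b1, b2)\<leftarrow>\<Delta> b. S (a1 * b1) * \<iota> (\<epsilon> (a2 * b2)))"
      by (rule prodsum)
    finally show ?thesis .
  qed
  have C: "\<iota> (\<epsilon> (u * v)) = (\<Sum>(c, d)\<leftarrow>\<Delta> u. \<Sum>(c', d')\<leftarrow>\<Delta> v. c * (c' * (S d' * S d)))" for u v
  proof -
    have "(\<Sum>(c, d)\<leftarrow>\<Delta> u. \<Sum>(c', d')\<leftarrow>\<Delta> v. c * (c' * (S d' * S d)))
       = (\<Sum>(c, d)\<leftarrow>\<Delta> u. c * ((\<Sum>(c', d')\<leftarrow>\<Delta> v. c' * S d') * S d))"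
      by (simp add: sum_list_mult_left[symmetric] sum_list_mult_right[symmetric] split_def mult.assoc)
    also have "\<dots> = (\<Sum>(c, d)\<leftarrow>\<Delta> u. \<iota> (\<epsilon> v) * (c * S d))"
      by (simp add: hd(12) sr)
    also have "\<dots> = \<iota> (\<epsilon> v) * \<iota> (\<epsilon> u)"
      by (simp add: sum_list_mult_left split_def hd(12)[unfolded split_def])
    also have "\<dots> = \<iota> (\<epsilon> (u * v))"
      by (simp add: hd(8) ka_mult[OF ka, symmetric] mult.commute)
    finally show ?thesis by simp
  qed
  have BC: "S (a * b) = (\<Sum>(a1, a2)\<leftarrow>\<Delta> a. \<Sum>(b1, b2)\<leftarrow>\<Delta> b. \<Sum>(c, d)\<leftarrow>\<Delta> a2. \<Sum>(c', d')\<leftarrow>\<Delta> b2.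
      S (a1 * b1) * (c * (c' * (S d' * S d))))"
    unfolding B C by (simp add: sum_list_mult_left split_def)
  have sw1: "\<And>a1 a2. (\<Sum>(b1, b2)\<leftarrow>\<Delta> b. \<Sum>(c, d)\<leftarrow>\<Delta> a2. \<Sum>(c', d')\<leftarrow>\<Delta> b2.
      S (a1 * b1) * (c * (c' * (S d' * S d)))) = (\<Sum>(c, d)\<leftarrow>\<Delta> a2. \<Sum>(b1, b2)\<leftarrow>\<Delta> b. \<Sum>(c', d')\<leftarrow>\<Delta> b2.
      S (a1 * b1) * (c * (c' * (S d' * S d))))"
    by (rule swap2)
  have D1: "S (a * b) = (\<Sum>(a1, c, d)\<leftarrow>concat (map (\<lambda>(x, b). map (\<lambda>(c, d). (x, c, d)) (\<Delta> b)) (\<Delta> a)).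
     \<Sum>(b1, c', d')\<leftarrow>concat (map (\<lambda>(x, b). map (\<lambda>(c, d). (x, c, d)) (\<Delta> b)) (\<Delta> b)).
      S (a1 * b1) * (c * (c' * (S d' * S d))))"
    unfolding BC by (simp only: tri1 sw1)
  let ?A3' = "\<lambda>u. concat (map (\<lambda>(x, b). map (\<lambda>(c, d). (x, c, d)) (\<Delta> b)) (\<Delta> u))"
  let ?A3 = "\<lambda>u. concat (map (\<lambda>(x, b). map (\<lambda>(c, d). (c, d, b)) (\<Delta> x)) (\<Delta> u))"
  have D2: "S (a * b) = (\<Sum>(a1, c, d)\<leftarrow>?A3 a. \<Sum>(b1, c', d')\<leftarrow>?A3' b.
      S (a1 * b1) * (c * (c' * (S d' * S d))))"
    unfolding D1
    by (rule sep3[OF ka teq3_sym[OF hd(2)]];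
        intro lin_map_sum_listF; unfold lin_map_def;
        auto simp: split_def Sa Ss sr mult.assoc distrib_left distrib_right)
  have D3: "S (a * b) = (\<Sum>(b1, c', d')\<leftarrow>?A3' b. \<Sum>(a1, c, d)\<leftarrow>?A3 a.
      S (a1 * b1) * (c * (c' * (S d' * S d))))"
    unfolding D2 by (rule swap3)
  have D4: "S (a * b) = (\<Sum>(b1, c', d')\<leftarrow>?A3 b. \<Sum>(a1, c, d)\<leftarrow>?A3 a.
      S (a1 * b1) * (c * (c' * (S d' * S d))))"
    unfolding D3
    by (rule sep3[OF ka teq3_sym[OF hd(2)]];
        intro lin_map_sum_listF; unfold lin_map_def;
        auto simp: split_def Sa Ss sr mult.assoc distrib_left distrib_right)
  have D5: "S (a * b) = (\<Sum>(a1, c, d)\<leftarrow>?A3 a. \<Sum>(b1, c', d')\<leftarrow>?A3 b.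
      S (a1 * b1) * (c * (c' * (S d' * S d))))"
    unfolding D4 by (rule swap3)
  have E1: "(\<Sum>(c, d)\<leftarrow>\<Delta> u. \<Sum>(c', d')\<leftarrow>\<Delta> v. S (c * c') * (d * d')) = \<iota> (\<epsilon> (u * v))" for u v
  proof -
    have "\<iota> (\<epsilon> (u * v)) = (\<Sum>(x, y)\<leftarrow>\<Delta> (u * v). S x * y)" by (rule hd(11)[symmetric])
    also have "\<dots> = (\<Sum>(x, y)\<leftarrow>concat (map (\<lambda>(x, y). map (\<lambda>(x', y'). (x * x', y * y')) (\<Delta> v)) (\<Delta> u)). S x * y)"
      by (rule sep2[OF ka hd(6)]) (auto simp: lin_map_def Sa Ss distrib_left distrib_right mult.assoc sr)
    also have "\<dots> = (\<Sum>(c, d)\<leftarrow>\<Delta> u. \<Sum>(c', d')\<leftarrow>\<Delta> v. S (c * c') * (d * d'))"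
      by (rule prodsum)
    finally show ?thesis by simp
  qed
  have CS: "S u = (\<Sum>(x, y)\<leftarrow>\<Delta> u. \<iota> (\<epsilon> x) * S y)" for u
  proof -
    have "S u = S (\<Sum>(x, y)\<leftarrow>\<Delta> u. \<iota> (\<epsilon> x) * y)" using hd(4) by simp
    also have "\<dots> = (\<Sum>(x, y)\<leftarrow>\<Delta> u. S (\<iota> (\<epsilon> x) * y))" by (rule lin_map_sum_list2[OF Sl])
    also have "\<dots> = (\<Sum>(x, y)\<leftarrow>\<Delta> u. \<iota> (\<epsilon> x) * S y)" by (simp add: Ss)
    finally show ?thesis .
  qed
  have E3: "\<iota> (\<epsilon> (u * v)) * (X * Y) = (\<iota> (\<epsilon> v) * X) * (\<iota> (\<epsilon> u) * Y)" for u v X Y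
  proof -
    have "\<iota> (\<epsilon> (u * v)) * (X * Y) = \<iota> (\<epsilon> v) * (\<iota> (\<epsilon> u) * (X * Y))"
      by (simp add: hd(8) ka_mult[OF ka] mult.commute[of "\<epsilon> u"] mult.assoc)
    also have "\<dots> = \<iota> (\<epsilon> v) * ((\<iota> (\<epsilon> u) * X) * Y)" by (simp only: mult.assoc)
    also have "\<dots> = \<iota> (\<epsilon> v) * ((X * \<iota> (\<epsilon> u)) * Y)" by (simp only: ka_central[OF ka, of "\<epsilon> u" X])
    also have "\<dots> = (\<iota> (\<epsilon> v) * X) * (\<iota> (\<epsilon> u) * Y)" by (simp only: mult.assoc)
    finally show ?thesis .
  qed
  have sw2: "\<And>a1 a2. (\<Sum>(c, d)\<leftarrow>\<Delta> a1. \<Sum>(b1, b2)\<leftarrow>\<Delta> b. \<Sum>(c', d')\<leftarrow>\<Delta> b1.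
      S (c * c') * (d * (d' * (S b2 * S a2)))) = (\<Sum>(b1, b2)\<leftarrow>\<Delta> b. \<Sum>(c, d)\<leftarrow>\<Delta> a1. \<Sum>(c', d')\<leftarrow>\<Delta> b1.
      S (c * c') * (d * (d' * (S b2 * S a2))))"
    by (rule swap2)
  have E2: "S (a * b) = (\<Sum>(a1, a2)\<leftarrow>\<Delta> a. \<Sum>(b1, b2)\<leftarrow>\<Delta> b. \<Sum>(c, d)\<leftarrow>\<Delta> a1. \<Sum>(c', d')\<leftarrow>\<Delta> b1.
      S (c * c') * (d * (d' * (S b2 * S a2))))"
    unfolding D5 by (simp only: tri2 sw2)
  also have "\<dots> = (\<Sum>(a1, a2)\<leftarrow>\<Delta> a. \<Sum>(b1, b2)\<leftarrow>\<Delta> b.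
      (\<Sum>(c, d)\<leftarrow>\<Delta> a1. \<Sum>(c', d')\<leftarrow>\<Delta> b1. S (c * c') * (d * d')) * (S b2 * S a2))"
    by (simp add: sum_list_mult_right[symmetric] split_def mult.assoc)
  also have "\<dots> = (\<Sum>(a1, a2)\<leftarrow>\<Delta> a. \<Sum>(b1, b2)\<leftarrow>\<Delta> b.
      (\<iota> (\<epsilon> b1) * S b2) * (\<iota> (\<epsilon> a1) * S a2))"
    by (simp add: E1 E3)
  also have "\<dots> = (\<Sum>(a1, a2)\<leftarrow>\<Delta> a. S b * (\<iota> (\<epsilon> a1) * S a2))"
    by (simp add: sum_list_mult_right split_def CS[of b, unfolded split_def, symmetric])
  also have "\<dots> = S b * S a"
    by (simp add: sum_list_mult_left split_def CS[of a, unfolded split_def, symmetric])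
  finally show ?thesis .
qed

lemma diff_negE: "(a::'a::ab_group_add) - b = - c \<Longrightarrow> a = b - c"
  by (metis diff_add_cancel diff_conv_add_uminus add.commute)

lemma grp1: "(a::'a::ab_group_add) + (b - c) - (a + b) = - c"
  by (simp add: algebra_simps)

lemma final_alg:
  fixes yaa yab yba ybb zaa zab zba zbb P Q :: "'h::ring_1"
  assumes cP: "\<And>x. P * x = x * P" and cQ: "\<And>x. Q * x = x * Q" and QP: "Q * P = 1"
    and R2: "ybb * yba = P * (yba * ybb)"
    and R1: "yab * yaa = P * (yaa * yab)"
    and R3: "P * (ybb * yaa) + yab * yba = P * (P * (yba * yab) + yaa * ybb)"
    and f11: "zaa * yaa + zab * yba = 1" and f12: "zaa * yab + zab * ybb = 0"
    and f21: "zba * yaa + zbb * yba = 0" and f22: "zba * yab + zbb * ybb = 1"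
    and g11: "yaa * zaa + yba * zab = 1" and g21: "yab * zaa + ybb * zab = 0"
    and g12: "yaa * zba + yba * zbb = 0" and g22: "yab * zba + ybb * zbb = 1"
  shows "yba * yaa = Q * (yaa * yba)
    \<and> ybb * yab = Q * (yab * ybb)
    \<and> P * (yba * yab) = Q * (yab * yba)
    \<and> ybb * yaa = yaa * ybb"
proof -
  have pP: "x * (P * w) = P * (x * w)" for x w
  proof -
    have "x * (P * w) = (x * P) * w" by (simp only: mult.assoc)
    also have "\<dots> = (P * x) * w" by (simp only: cP[of x])
    finally show ?thesis by (simp only: mult.assoc)
  qed
  have pQ: "x * (Q * w) = Q * (x * w)" for x w
  proof -
    have "x * (Q * w) = (x * Q) * w" by (simp only: mult.assoc)
    also have "\<dots> = (Q * x) * w" by (simp only: cQ[of x])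
    finally show ?thesis by (simp only: mult.assoc)
  qed
  have QPw: "Q * (P * w) = w" for w by (simp add: mult.assoc[symmetric] QP)
  define D where "D = ybb * yaa - P * (yba * yab)"
  have R2': "ybb * (yba * w) = P * (yba * (ybb * w))" for w
  proof -
    have "(ybb * yba) * w = (P * (yba * ybb)) * w" using R2 by simp
    then show ?thesis by (simp only: mult.assoc)
  qed
  have R1': "yab * (yaa * w) = P * (yaa * (yab * w))" for w
  proof -
    have "(yab * yaa) * w = (P * (yaa * yab)) * w" using R1 by simp
    then show ?thesis by (simp only: mult.assoc)
  qed
  have c12: "yab * yba - P * (yaa * ybb) = - (P * D)"
  proof -
    have "yab * yba = P * (P * (yba * yab) + yaa * ybb) - P * (ybb * yaa)"
      using R3 by (simp add: algebra_simps)
    then show ?thesis unfolding D_def by (simp add: algebra_simps)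
  qed
  have c12': "yab * (yba * w) - P * (yaa * (ybb * w)) = - (P * (D * w))" for w
    using arg_cong[OF c12, of "\<lambda>t. t * w"] by (simp add: algebra_simps)
  have Dz11: "D * zaa = ybb"
  proof -
    have "ybb * (yaa * zaa + yba * zab) - P * (yba * (yab * zaa + ybb * zab)) = ybb"
      using g11 g21 by simp
    then show ?thesis unfolding D_def by (simp add: algebra_simps R2')
  qed
  have Dz21: "D * zba = - (P * yba)"
  proof -
    have "ybb * (yaa * zba + yba * zbb) - P * (yba * (yab * zba + ybb * zbb)) = - (P * yba)"
      using g12 g22 by simp
    then show ?thesis unfolding D_def by (simp add: algebra_simps R2')
  qed
  have c12'': "yab * (yba * w) = P * (yaa * (ybb * w)) - P * (D * w)" for w
    using c12'[of w] by (rule diff_negE)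
  have Dz12: "D * zab = - (Q * yab)"
  proof -
    have "yab * (yaa * zaa + yba * zab) - P * (yaa * (yab * zaa + ybb * zab)) = yab"
      using g11 g21 by simp
    moreover have "yab * (yaa * zaa + yba * zab) = P * (yaa * (yab * zaa)) + (P * (yaa * (ybb * zab)) - P * (D * zab))"
      by (simp only: distrib_left R1' c12'')
    moreover have "P * (yaa * (yab * zaa + ybb * zab)) = P * (yaa * (yab * zaa)) + P * (yaa * (ybb * zab))"
      by (simp only: distrib_left)
    ultimately have "- (P * (D * zab)) = yab" by (simp only: grp1)
    then have "P * (D * zab) = - yab" by (metis minus_minus)
    then have "Q * (P * (D * zab)) = Q * (- yab)" by (rule arg_cong)
    then show ?thesis by (simp only: QPw mult_minus_right)
  qed
  have Dz22: "D * zbb = yaa"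
  proof -
    have "yab * (yaa * zba + yba * zbb) - P * (yaa * (yab * zba + ybb * zbb)) = - (P * yaa)"
      using g12 g22 by simp
    moreover have "yab * (yaa * zba + yba * zbb) = P * (yaa * (yab * zba)) + (P * (yaa * (ybb * zbb)) - P * (D * zbb))"
      by (simp only: distrib_left R1' c12'')
    moreover have "P * (yaa * (yab * zba + ybb * zbb)) = P * (yaa * (yab * zba)) + P * (yaa * (ybb * zbb))"
      by (simp only: distrib_left)
    ultimately have "- (P * (D * zbb)) = - (P * yaa)" by (simp only: grp1)
    then have "Q * (P * (D * zbb)) = Q * (P * yaa)" by simp
    then show ?thesis by (simp add: QPw)
  qed
  have e21: "- (P * (yba * yaa)) + yaa * yba = 0"
  proof -
    have "D * (zba * yaa + zbb * yba) = 0" using f21 by simp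
    then show ?thesis by (simp add: distrib_left mult.assoc[symmetric] Dz21 Dz22)
  qed
  have e12: "ybb * yab - Q * (yab * ybb) = 0"
  proof -
    have "D * (zaa * yab + zab * ybb) = 0" using f12 by simp
    then show ?thesis by (simp add: distrib_left mult.assoc[symmetric] Dz11 Dz12)
  qed
  have e11: "ybb * yaa - Q * (yab * yba) = D"
  proof -
    have "D * (zaa * yaa + zab * yba) = D" using f11 by simp
    then show ?thesis by (simp add: distrib_left mult.assoc[symmetric] Dz11 Dz12)
  qed
  have e22: "- (P * (yba * yab)) + yaa * ybb = D"
  proof -
    have "D * (zba * yab + zbb * ybb) = D" using f22 by simp
    then show ?thesis by (simp add: distrib_left mult.assoc[symmetric] Dz21 Dz22)
  qed
  have goal1: "yba * yaa = Q * (yaa * yba)"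
  proof -
    have "P * (yba * yaa) = yaa * yba" using e21 by (simp add: algebra_simps)
    then have "Q * (P * (yba * yaa)) = Q * (yaa * yba)" by simp
    then show ?thesis by (simp add: QPw)
  qed
  have goal2: "ybb * yab = Q * (yab * ybb)" using e12 by simp
  have goal3: "P * (yba * yab) = Q * (yab * yba)" using e11 unfolding D_def by (simp add: algebra_simps)
  have goal4: "ybb * yaa = yaa * ybb" using e22 unfolding D_def by (simp add: algebra_simps)
  show ?thesis using goal1 goal2 goal3 goal4 by blast
qed

lemma test_rel:
  fixes \<iota> :: "'k::field \<Rightarrow> 'h::ring_1"
  assumes ka: "k_algebra \<iota>" and "comodule_algebra_Ap \<iota> p \<Delta> \<epsilon> y"
  shows "y 1 2 * y 1 1 = \<iota> p * (y 1 1 * y 1 2)"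
    and "y 2 2 * y 2 1 = \<iota> p * (y 2 1 * y 2 2)"
    and "\<iota> p * (y 2 2 * y 1 1) + y 1 2 * y 2 1 = \<iota> p * (\<iota> p * (y 2 1 * y 1 2) + y 1 1 * y 2 2)"
proof -
  have eq: "qp_mult \<iota> p (rho_gen y 2) (rho_gen y 1) = (\<lambda>m. \<iota> p * qp_mult \<iota> p (rho_gen y 1) (rho_gen y 2) m)"
    using assms(2) unfolding comodule_algebra_Ap_def by blast
  have at: "\<And>m. qp_mult \<iota> p (rho_gen y 2) (rho_gen y 1) m = \<iota> p * qp_mult \<iota> p (rho_gen y 1) (rho_gen y 2) m"
    using eq by metis
  show "y 1 2 * y 1 1 = \<iota> p * (y 1 1 * y 1 2)"
    using at[of "(2, 0)"] by (simp add: qp_mult_def rho_gen_def numeral_2_eq_2 ka_one[OF ka])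
  show "y 2 2 * y 2 1 = \<iota> p * (y 2 1 * y 2 2)"
    using at[of "(0, 2)"] by (simp add: qp_mult_def rho_gen_def numeral_2_eq_2 ka_one[OF ka])
  show "\<iota> p * (y 2 2 * y 1 1) + y 1 2 * y 2 1 = \<iota> p * (\<iota> p * (y 2 1 * y 1 2) + y 1 1 * y 2 2)"
    using at[of "(1, 1)"] by (simp add: qp_mult_def rho_gen_def ka_one[OF ka])
qed

lemma main_facts:
  fixes \<iota> :: "'k::field \<Rightarrow> 'h::ring_1"
  assumes H: "hopf_algebra \<iota> \<Delta> \<epsilon> S" and C: "comodule_algebra_Ap \<iota> p \<Delta> \<epsilon> y"
    and SS: "\<forall>a. S (S a) = a"
    and l: "l \<in> {1, 2}" and j: "j \<in> {1, 2}"
  shows "S (y l 1) * y 1 j + S (y l 2) * y 2 j = (if l = j then 1 else 0)"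
    and "y 1 j * S (y l 1) + y 2 j * S (y l 2) = (if l = j then 1 else 0)"
proof -
  note hd = hopfD[OF H]
  have ka: "k_algebra \<iota>" by (rule hd(1))
  have Sl: "lin_map \<iota> S" by (rule hd(10))
  note sr = scal_right[OF ka]
  note Sa = lin_map_add[OF Sl] and Ss = lin_map_scal[OF Sl]
  have teq: "teq2 \<iota> (\<Delta> (y l j)) [(y l 1, y 1 j), (y l 2, y 2 j)]" if "l \<in> {1, 2}" "j \<in> {1, 2}" for l j
    using C that unfolding comodule_algebra_Ap_def by blast
  have eps: "\<iota> (\<epsilon> (y l j)) = (if l = j then 1 else 0)" if "l \<in> {1, 2}" "j \<in> {1, 2}" for l j
    using C that unfolding comodule_algebra_Ap_def by (auto simp: ka_one[OF ka] ka_zero[OF ka])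
  have S1: "S 1 = 1"
  proof -
    have "(1::'h) = \<iota> (\<epsilon> 1)" by (simp add: hd(9) ka_one[OF ka])
    also have "\<dots> = (\<Sum>(x, w)\<leftarrow>\<Delta> 1. S x * w)" by (rule hd(11)[symmetric])
    also have "\<dots> = (\<Sum>(x, w)\<leftarrow>[(1, 1)]. S x * w)"
      by (rule sep2[OF ka hd(7)]) (auto simp: lin_map_def Sa Ss distrib_left distrib_right mult.assoc sr)
    finally show ?thesis by simp
  qed
  have S0: "S 0 = 0" by (rule lin_map_zero[OF Sl])
  have F: "S (y l 1) * y 1 j + S (y l 2) * y 2 j = (if l = j then 1 else 0)" if "l \<in> {1, 2}" "j \<in> {1, 2}" for l j
  proof -
    have "(if l = j then 1 else 0) = (\<Sum>(x, w)\<leftarrow>\<Delta> (y l j). S x * w)"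
      using hd(11)[of "y l j"] eps[OF that] by simp
    also have "\<dots> = (\<Sum>(x, w)\<leftarrow>[(y l 1, y 1 j), (y l 2, y 2 j)]. S x * w)"
      by (rule sep2[OF ka teq[OF that]]) (auto simp: lin_map_def Sa Ss distrib_left distrib_right mult.assoc sr)
    finally show ?thesis by simp
  qed
  have F': "y l 1 * S (y 1 j) + y l 2 * S (y 2 j) = (if l = j then 1 else (0::'h))" if "l \<in> {1, 2}" "j \<in> {1, 2}" for l j
  proof -
    have "(if l = j then 1 else 0) = (\<Sum>(x, w)\<leftarrow>\<Delta> (y l j). x * S w)"
      using hd(12)[of "y l j"] eps[OF that] by simp
    also have "\<dots> = (\<Sum>(x, w)\<leftarrow>[(y l 1, y 1 j), (y l 2, y 2 j)]. x * S w)"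
      by (rule sep2[OF ka teq[OF that]]) (auto simp: lin_map_def Sa Ss distrib_left distrib_right mult.assoc sr)
    finally show ?thesis by simp
  qed
  show "S (y l 1) * y 1 j + S (y l 2) * y 2 j = (if l = j then 1 else 0)" by (rule F[OF l j])
  have "S (y l 1 * S (y 1 j) + y l 2 * S (y 2 j)) = S (if l = j then 1 else 0)"
    using F'[OF l j] by simp
  then show "y 1 j * S (y l 1) + y 2 j * S (y l 2) = (if l = j then 1 else 0)"
    by (simp add: Sa S_antimult[OF H] SS S1 S0 split: if_splits)
qed

theorem lemma5p3:
  fixes \<iota> :: "'k::field \<Rightarrow> 'h::ring_1"
    and p :: 'k
    and \<Delta> :: "'h \<Rightarrow> ('h \<times> 'h) list" and \<epsilon> :: "'h \<Rightarrow> 'k" and S :: "'h \<Rightarrow> 'h"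
    and y :: "nat \<Rightarrow> nat \<Rightarrow> 'h"
  assumes "p \<noteq> 0"
    and "hopf_algebra \<iota> \<Delta> \<epsilon> S"
    and "comodule_algebra_Ap \<iota> p \<Delta> \<epsilon> y"
    and "\<forall>a. S (S a) = a"
  shows "y 2 1 * y 1 1 = \<iota> (inverse p) * (y 1 1 * y 2 1)
    \<and> y 2 2 * y 1 2 = \<iota> (inverse p) * (y 1 2 * y 2 2)
    \<and> \<iota> p * (y 2 1 * y 1 2) = \<iota> (inverse p) * (y 1 2 * y 2 1)
    \<and> y 2 2 * y 1 1 = y 1 1 * y 2 2"
proof -
  have ka: "k_algebra \<iota>" by (rule hopfD(1)[OF assms(2)])
  note rel = test_rel[OF ka assms(3)]
  note MF1 = main_facts(1)[OF assms(2,3,4)] and MF2 = main_facts(2)[OF assms(2,3,4)]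
  have QP: "\<iota> (inverse p) * \<iota> p = 1"
    using assms(1) by (simp add: ka_mult[OF ka, symmetric] ka_one[OF ka])
  show ?thesis
    apply (rule final_alg[where P = "\<iota> p" and Q = "\<iota> (inverse p)" and zaa = "S (y 1 1)" and zab = "S (y 1 2)" and zba = "S (y 2 1)" and zbb = "S (y 2 2)"])
                   apply (rule ka_central[OF ka])
                  apply (rule ka_central[OF ka])
                 apply (rule QP)
                apply (rule rel(2))
               apply (rule rel(1))
              apply (rule rel(3))
    using MF1[of 1 1] MF1[of 1 2] MF1[of 2 1] MF1[of 2 2] MF2[of 1 1] MF2[of 2 1] MF2[of 1 2] MF2[of 2 2]
    by simp_all
qed

end
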